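(* Let $m$ be a positive integer and define $\zeta^m(s,t):=\sum_{n=1}^\infty Z^m_n(s)\,n^{-t}$. Then for $\operatorname{Re}s>0$ and $\operatorname{Re}t>1$, $$\zeta^m(s,t)=\prod_{k=0}^m\zeta(sk+t).$$
   Context: For positive integers $m,N$, $Z^{m}_N(s):=\sum_{n_1|n_2|\cdots|n_m|N}(n_1n_2\cdots n_m)^{-s}$, the sum over all $m$-tuples of positive integers with $n_1\mid n_2\mid\cdots\mid n_m\mid N$. $\zeta$ is the Riemann zeta function. *)

theory Defs
  imports "HOL-Analysis.Analysis"
begin

definition div_chains :: "nat \<Rightarrow> nat \<Rightarrow> nat list set" where
  "div_chains m N = {ns. length ns = m \<and> (\<forall>i<m. 0 < ns ! i)
      \<and> (\<forall>i. Suc i < m \<longrightarrow> ns ! i dvd ns ! Suc i)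
      \<and> (0 < m \<longrightarrow> ns ! (m - 1) dvd N)}"

definition Zm :: "nat \<Rightarrow> nat \<Rightarrow> complex \<Rightarrow> complex" where
  "Zm m N s = (\<Sum>ns\<in>div_chains m N. (of_nat (prod_list ns) :: complex) powr (- s))"

text \<open>Riemann zeta function, given by its Dirichlet series (valid for Re z > 1,
  the only range in which it is used below).\<close>
definition riemann_zeta :: "complex \<Rightarrow> complex" where
  "riemann_zeta z = (\<Sum>n. (of_nat (Suc n) :: complex) powr (- z))"

end

theory Submission
  imports Defs
begin

lemma zeta_has_sum:
  assumes "Re z > 1"
  shows "((\<lambda>n::nat. (of_nat n :: complex) powr (- z)) has_sum riemann_zeta z) {1..}"
proof -
  have "summable (\<lambda>n. real n powr (- Re z))"
    using assms by (subst summable_real_powr_iff) simp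
  hence s1: "summable (\<lambda>n. real (Suc n) powr (- Re z))"
    using summable_Suc_iff[of "\<lambda>n. real n powr (- Re z)"] by simp
  have eq: "norm ((of_nat (Suc n) :: complex) powr (- z)) = real (Suc n) powr (- Re z)" for n
    by (subst norm_powr_real_powr) auto
  have ns: "summable (\<lambda>n. norm ((of_nat (Suc n) :: complex) powr (- z)))"
    unfolding eq by (rule s1)
  have "(\<lambda>n. (of_nat (Suc n) :: complex) powr (- z)) sums riemann_zeta z"
    unfolding riemann_zeta_def using summable_norm_cancel[OF ns] by (rule summable_sums)
  from norm_summable_imp_has_sum[OF ns this]
  have "((\<lambda>n. (of_nat (Suc n) :: complex) powr (- z)) has_sum riemann_zeta z) UNIV" .
  moreover have "bij_betw Suc UNIV {1::nat..}"
    by (rule bij_betwI') (auto simp: Suc_le_D)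
  ultimately show ?thesis
    using has_sum_reindex_bij_betw[where f="\<lambda>n. (of_nat n :: complex) powr (- z)"]
    by blast
qed

lemma dirichlet_has_sum:
  fixes f g :: "nat \<Rightarrow> complex"
  assumes hf: "(f has_sum F) {1..}" and hg: "(g has_sum G) {1..}"
  shows "((\<lambda>N. \<Sum>d | d dvd N. f d * g (N div d)) has_sum (F * G)) {1..}"
proof -
  have fa: "(\<lambda>x. norm (f x)) summable_on {1..}"
    using hf summable_on_iff_abs_summable_on_complex has_sum_imp_summable by blast
  have ga: "(\<lambda>x. norm (g x)) summable_on {1..}"
    using hg summable_on_iff_abs_summable_on_complex has_sum_imp_summable by blast
  have inner: "(\<lambda>e. norm (f d * g e)) summable_on {1..}" for d
    unfolding norm_mult by (rule summable_on_cmult_right[OF ga])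
  have inf_eq: "infsum (\<lambda>e. norm (f d * g e)) {1..} = norm (f d) * infsum (\<lambda>e. norm (g e)) {1..}" for d
    unfolding norm_mult by (rule infsum_cmult_right')
  have outer: "(\<lambda>d. norm (infsum (\<lambda>e. norm (f d * g e)) {1..})) summable_on {1..}"
  proof -
    have "(\<lambda>d. norm (f d) * infsum (\<lambda>e. norm (g e)) {1..}) summable_on {1..}"
      by (rule summable_on_cmult_left[OF fa])
    moreover have "norm (norm (f d) * infsum (\<lambda>e. norm (g e)) {1..}) = norm (f d) * infsum (\<lambda>e. norm (g e)) {1..}" for d
      by (simp add: infsum_nonneg)
    ultimately show ?thesis using inf_eq by simp
  qed
  have abs: "(\<lambda>x. norm ((\<lambda>(d,e). f d * g e) x)) summable_on ({1::nat..} \<times> {1::nat..})"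
    using Infinite_Sum.abs_summable_on_Sigma_iff[where f="\<lambda>(d,e). f d * g e" and A="{1::nat..}" and B="\<lambda>_. {1::nat..}"]
      inner outer by simp
  have pair: "((\<lambda>(d,e). f d * g e) has_sum (F * G)) ({1::nat..} \<times> {1::nat..})"
  proof (rule has_sum_SigmaI[where g="\<lambda>d. f d * G"])
    show "((\<lambda>e. case (d, e) of (d, e) \<Rightarrow> f d * g e) has_sum f d * G) {1..}" for d
      using has_sum_cmult_right[OF hg, of "f d"] by simp
    show "((\<lambda>d. f d * G) has_sum F * G) {1..}"
      by (rule has_sum_cmult_left[OF hf])
    show "(\<lambda>(d, e). f d * g e) summable_on {1..} \<times> {1..}"
      using abs Infinite_Sum.abs_summable_summable by blast
  qed
  define S where "S = Sigma {1::nat..} (\<lambda>N. {d. d dvd N})"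
  define \<phi> where "\<phi> = (\<lambda>(N::nat, d::nat). f d * g (N div d))"
  have bij: "bij_betw (\<lambda>(d,e). (d*e, d)) ({1::nat..} \<times> {1::nat..}) S"
    unfolding S_def
  proof (rule bij_betwI')
    fix x y :: "nat \<times> nat"
    assume "x \<in> {1..} \<times> {1..}" "y \<in> {1..} \<times> {1..}"
    then show "((case x of (d, e) \<Rightarrow> (d * e, d)) = (case y of (d, e) \<Rightarrow> (d * e, d))) = (x = y)"
      by (cases x; cases y) auto
  next
    fix x :: "nat \<times> nat" assume "x \<in> {1..} \<times> {1..}"
    then show "(case x of (d, e) \<Rightarrow> (d * e, d)) \<in> Sigma {1..} (\<lambda>N. {d. d dvd N})"
      by (cases x) auto
  next
    fix y :: "nat \<times> nat" assume "y \<in> Sigma {1..} (\<lambda>N. {d. d dvd N})"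
    then show "\<exists>x\<in>{1..} \<times> {1..}. y = (case x of (d, e) \<Rightarrow> (d * e, d))"
      by (cases y) (auto elim!: dvdE simp: Suc_le_eq intro!: bexI[of _ "(snd y, fst y div snd y)"])
  qed
  have "((\<lambda>x. \<phi> ((\<lambda>(d,e). (d*e, d)) x)) has_sum (F * G)) ({1::nat..} \<times> {1::nat..})"
    using pair by (rule has_sum_cong[THEN iffD1, rotated]) (auto simp: \<phi>_def)
  hence "(\<phi> has_sum (F * G)) S"
    using has_sum_reindex_bij_betw[OF bij] by blast
  thus ?thesis
    unfolding S_def
  proof (rule has_sum_SigmaD)
    fix N :: nat assume "N \<in> {1..}"
    hence "finite {d. d dvd N}" by (intro finite_divisors_nat) auto
    thus "((\<lambda>d. \<phi> (N, d)) has_sum (\<Sum>d | d dvd N. f d * g (N div d))) {d. d dvd N}"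
      by (intro has_sum_finiteI) (auto simp: \<phi>_def)
  qed
qed

lemma div_chains_0: "div_chains 0 N = {[]}"
  by (auto simp: div_chains_def)

lemma div_chains_Suc:
  assumes "N > 0"
  shows "div_chains (Suc m) N = (\<lambda>(d,ns). ns @ [d]) ` (SIGMA d:{d. d dvd N}. div_chains m d)"
proof (intro equalityI subsetI)
  fix xs assume xs: "xs \<in> div_chains (Suc m) N"
  hence len: "length xs = Suc m" by (simp add: div_chains_def)
  hence ne: "xs \<noteq> []" by auto
  have dec: "xs = butlast xs @ [last xs]" using ne by simp
  have last_eq: "last xs = xs ! m" using len ne by (simp add: last_conv_nth)
  have "last xs dvd N" using xs last_eq by (simp add: div_chains_def)
  moreover have "butlast xs \<in> div_chains m (last xs)"
    using xs len last_eq unfolding div_chains_def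
    by (auto simp: nth_butlast) (metis One_nat_def Suc_pred diff_Suc_less)
  ultimately show "xs \<in> (\<lambda>(d,ns). ns @ [d]) ` (SIGMA d:{d. d dvd N}. div_chains m d)"
    by (intro image_eqI[of _ _ "(last xs, butlast xs)"]) (auto simp: dec[symmetric])
next
  fix xs assume "xs \<in> (\<lambda>(d,ns). ns @ [d]) ` (SIGMA d:{d. d dvd N}. div_chains m d)"
  then obtain d ns where xs: "xs = ns @ [d]" and d: "d dvd N" and ns: "ns \<in> div_chains m d"
    by auto
  have dpos: "d > 0" using d assms by (auto intro: Nat.gr0I)
  have len: "length ns = m" using ns by (simp add: div_chains_def)
  show "xs \<in> div_chains (Suc m) N"
    unfolding div_chains_def
  proof (intro CollectI conjI allI impI)
    show "length xs = Suc m" using xs len by simp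
    show "0 < xs ! i" if "i < Suc m" for i
      using that ns dpos len unfolding xs div_chains_def by (auto simp: nth_append)
    show "xs ! i dvd xs ! Suc i" if "Suc i < Suc m" for i
    proof (cases "Suc i < m")
      case True then show ?thesis using ns len unfolding xs div_chains_def by (auto simp: nth_append)
    next
      case False
      hence "Suc i = m" using that by simp
      then show ?thesis using ns len unfolding xs div_chains_def by (auto simp: nth_append)
    qed
    show "xs ! (Suc m - 1) dvd N" using d len xs by (simp add: nth_append)
  qed
qed

lemma finite_div_chains: "N > 0 \<Longrightarrow> finite (div_chains m N)"
proof (induction m arbitrary: N)
  case 0 then show ?case by (simp add: div_chains_0)
next
  case (Suc m)
  have fin: "finite {d. d dvd N}" using Suc.prems by (simp add: finite_divisors_nat)
  have "finite (SIGMA d:{d. d dvd N}. div_chains m d)"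
    using fin Suc.IH Suc.prems by (intro finite_SigmaI) (auto intro: Nat.gr0I)
  then show ?case using Suc.prems by (simp add: div_chains_Suc)
qed

lemma Zm_0: "Zm 0 N s = 1"
  by (simp add: Zm_def div_chains_0)

lemma of_nat_mult_powr: "(of_nat (a * b) :: complex) powr z = of_nat a powr z * of_nat b powr z"
  by (simp only: of_nat_mult, rule powr_times_real) auto

lemma Zm_Suc:
  assumes "N > 0"
  shows "Zm (Suc m) N s = (\<Sum>d | d dvd N. Zm m d s * of_nat d powr (- s))"
proof -
  have inj: "inj_on (\<lambda>(d::nat, ns::nat list). ns @ [d]) A" for A
    by (auto simp: inj_on_def)
  have fin: "finite {d. d dvd N}" using assms by (simp add: finite_divisors_nat)
  have fin2: "\<forall>d\<in>{d. d dvd N}. finite (div_chains m d)"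
    by (metis assms dvd_pos_nat finite_div_chains mem_Collect_eq)
  have "Zm (Suc m) N s = (\<Sum>x\<in>(SIGMA d:{d. d dvd N}. div_chains m d).
            (of_nat (prod_list (snd x @ [fst x])) :: complex) powr (- s))"
    unfolding Zm_def div_chains_Suc[OF assms]
    by (subst sum.reindex[OF inj]) (simp add: case_prod_unfold)
  also have "\<dots> = (\<Sum>d | d dvd N. \<Sum>ns\<in>div_chains m d.
            (of_nat (prod_list ns * d) :: complex) powr (- s))"
    by (subst sum.Sigma[OF fin fin2]) (simp add: case_prod_unfold)
  also have "\<dots> = (\<Sum>d | d dvd N. Zm m d s * of_nat d powr (- s))"
    unfolding Zm_def of_nat_mult_powr by (simp add: sum_distrib_right)
  finally show ?thesis .
qed

lemma main_has_sum:
  assumes s: "Re s \<ge> 0"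
  shows "Re t > 1 \<Longrightarrow> ((\<lambda>N. Zm m N s * (of_nat N :: complex) powr (- t))
           has_sum (\<Prod>k=0..m. riemann_zeta (s * of_nat k + t))) {1..}"
proof (induction m arbitrary: t)
  case 0
  then show ?case using zeta_has_sum[of t] by (simp add: Zm_0)
next
  case (Suc m)
  have IH: "((\<lambda>d. Zm m d s * (of_nat d :: complex) powr (- (s + t)))
           has_sum (\<Prod>k=0..m. riemann_zeta (s * of_nat k + (s + t)))) {1..}"
    using Suc.IH[of "s + t"] Suc.prems s by simp
  from dirichlet_has_sum[OF IH zeta_has_sum[OF Suc.prems]]
  have D: "((\<lambda>N. \<Sum>d | d dvd N. Zm m d s * (of_nat d :: complex) powr (- (s + t)) * of_nat (N div d) powr (- t))
       has_sum (\<Prod>k=0..m. riemann_zeta (s * of_nat k + (s + t))) * riemann_zeta t) {1..}" .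
  have eq: "(\<Sum>d | d dvd N. Zm m d s * (of_nat d :: complex) powr (- (s + t)) * of_nat (N div d) powr (- t))
      = Zm (Suc m) N s * (of_nat N :: complex) powr (- t)" if "N \<in> {1..}" for N
  proof -
    have "N > 0" using that by simp
    have "Zm (Suc m) N s * (of_nat N :: complex) powr (- t)
        = (\<Sum>d | d dvd N. Zm m d s * of_nat d powr (- s) * (of_nat N :: complex) powr (- t))"
      by (simp add: Zm_Suc[OF \<open>N > 0\<close>] sum_distrib_right)
    also have "\<dots> = (\<Sum>d | d dvd N. Zm m d s * (of_nat d :: complex) powr (- (s + t)) * of_nat (N div d) powr (- t))"
    proof (rule sum.cong[OF refl])
      fix d assume "d \<in> {d. d dvd N}"
      hence "N = d * (N div d)" by simp
      hence "(of_nat N :: complex) powr (- t) = of_nat d powr (- t) * of_nat (N div d) powr (- t)"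
        by (metis of_nat_mult_powr)
      moreover have "(of_nat d :: complex) powr (- (s + t)) = of_nat d powr (- s) * of_nat d powr (- t)"
        by (simp add: powr_add[symmetric])
      ultimately show "Zm m d s * of_nat d powr (- s) * (of_nat N :: complex) powr (- t)
          = Zm m d s * (of_nat d :: complex) powr (- (s + t)) * of_nat (N div d) powr (- t)"
        by (simp add: mult_ac)
    qed
    finally show ?thesis by simp
  qed
  have P: "(\<Prod>k=0..m. riemann_zeta (s * of_nat k + (s + t))) * riemann_zeta t
      = (\<Prod>k=0..Suc m. riemann_zeta (s * of_nat k + t))"
    by (subst prod.atLeast0_atMost_Suc_shift) (simp add: algebra_simps)
  show ?case
    using D unfolding P by (rule has_sum_cong[THEN iffD1, rotated]) (use eq in auto)
qed

theorem mainTheorem5: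
  fixes m :: nat and s t :: complex
  assumes "m \<ge> 1" and "Re s > 0" and "Re t > 1"
  shows "(\<lambda>n. Zm m (Suc n) s * (of_nat (Suc n) :: complex) powr (- t))
           sums (\<Prod>k=0..m. riemann_zeta (s * of_nat k + t))"
proof -
  have H: "((\<lambda>N. Zm m N s * (of_nat N :: complex) powr (- t))
           has_sum (\<Prod>k=0..m. riemann_zeta (s * of_nat k + t))) {1..}"
    using main_has_sum[of s t m] assms by simp
  have "bij_betw Suc UNIV {1::nat..}"
    by (rule bij_betwI') (auto simp: Suc_le_D)
  from has_sum_reindex_bij_betw[OF this, where f="\<lambda>N. Zm m N s * (of_nat N :: complex) powr (- t)"] H
  have "((\<lambda>n. Zm m (Suc n) s * (of_nat (Suc n) :: complex) powr (- t))
           has_sum (\<Prod>k=0..m. riemann_zeta (s * of_nat k + t))) UNIV" by simp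
  thus ?thesis by (rule has_sum_imp_sums)
qed

end
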